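(* Let $k \ge 2$ and $n$ be positive integers, and let $a_1<\dots<a_r<n-1$ be positive integers. Then there is a connected graph $G$ with \[\mathrm{SW}_k(G)=\mathrm{SW}_k(S_n)-\binom{a_1}{k-1}-\dots-\binom{a_r}{k-1}.\]
   Context: $S_n$ denotes the star graph on $n$ vertices (one center adjacent to the other $n-1$ vertices, with $n-1$ edges). For a connected graph $G$ and a subset $S \subset V(G)$, the Steiner distance $d(S)$ is the smallest number of edges in a connected subgraph of $G$ whose vertex set contains $S$. For an integer $k\ge 2$, the Steiner--Wiener $k$ index of $G$ is $\mathrm{SW}_k(G)=\sum_{S \subset V(G),\ |S|=k} d(S)$. *)

theory Defs
  imports Main
begin

definition simple_graph :: "'a set \<Rightarrow> 'a set set \<Rightarrow> bool" where
  "simple_graph V E \<longleftrightarrow> finite V \<and>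
     (\<forall>e\<in>E. \<exists>u v. u \<noteq> v \<and> u \<in> V \<and> v \<in> V \<and> e = {u, v})"

definition adj_rel :: "'a set set \<Rightarrow> ('a \<times> 'a) set" where
  "adj_rel E = {(u, v). {u, v} \<in> E \<and> u \<noteq> v}"

definition connected_graph :: "'a set \<Rightarrow> 'a set set \<Rightarrow> bool" where
  "connected_graph V E \<longleftrightarrow> simple_graph V E \<and> V \<noteq> {} \<and>
     (\<forall>u\<in>V. \<forall>v\<in>V. (u, v) \<in> (adj_rel E)\<^sup>*)"

definition steiner_dist :: "'a set \<Rightarrow> 'a set set \<Rightarrow> 'a set \<Rightarrow> nat" where
  "steiner_dist V E S = (LEAST m. \<exists>W F. W \<subseteq> V \<and> F \<subseteq> E \<and> connected_graph W F
       \<and> S \<subseteq> W \<and> card F = m)"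

definition SW :: "nat \<Rightarrow> 'a set \<Rightarrow> 'a set set \<Rightarrow> nat" where
  "SW k V E = (\<Sum>S\<in>{S. S \<subseteq> V \<and> card S = k}. steiner_dist V E S)"

definition star_V :: "nat \<Rightarrow> nat set" where
  "star_V n = {0..<n}"

definition star_E :: "nat \<Rightarrow> nat set set" where
  "star_E n = {{0, i} | i. i \<in> {1..<n}}"

end

theory Submission
  imports Defs
begin

lemma conn_card:
  assumes "connected_graph W F"
  shows "card W \<le> card F + 1"
proof -
  have sg: "simple_graph W F" and ne: "W \<noteq> {}" and cn: "\<forall>u\<in>W. \<forall>v\<in>W. (u, v) \<in> (adj_rel F)\<^sup>*"
    using assms unfolding connected_graph_def by auto
  have fW: "finite W" using sg unfolding simple_graph_def by auto
  have "F \<subseteq> Pow W" using sg unfolding simple_graph_def by auto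
  hence fF: "finite F" using fW by (meson finite_Pow_iff finite_subset)
  obtain r where r: "r \<in> W" using ne by auto
  define R where "R = adj_rel F"
  define dist where "dist v = (LEAST m. (v, r) \<in> R ^^ m)" for v
  have ex: "\<exists>w. {v, w} \<in> F \<and> dist w < dist v" if v: "v \<in> W - {r}" for v
  proof -
    have "(v, r) \<in> R\<^sup>*" using cn v r R_def by auto
    then obtain m where "(v, r) \<in> R ^^ m" using rtrancl_power by blast
    hence d: "(v, r) \<in> R ^^ dist v" unfolding dist_def by (rule LeastI)
    have "dist v \<noteq> 0"
    proof
      assume "dist v = 0"
      with d have "(v, r) \<in> Id" by simp
      with v show False by auto
    qed
    then obtain d' where dd: "dist v = Suc d'" using not0_implies_Suc by blast
    then obtain y where y: "(v, y) \<in> R" "(y, r) \<in> R ^^ d'" using d relpow_Suc_D2 by metis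
    have "dist y \<le> d'" unfolding dist_def using y(2) by (rule Least_le)
    moreover have "{v, y} \<in> F" using y(1) unfolding R_def adj_rel_def by auto
    ultimately show ?thesis using dd by (intro exI[of _ y]) auto
  qed
  then obtain f where f: "\<forall>v\<in>W - {r}. {v, f v} \<in> F \<and> dist (f v) < dist v"
    using bchoice[of "W - {r}" "\<lambda>v w. {v, w} \<in> F \<and> dist w < dist v"] by blast
  have inj: "inj_on (\<lambda>v. {v, f v}) (W - {r})"
  proof (rule inj_onI)
    fix v v' assume a: "v \<in> W - {r}" "v' \<in> W - {r}" "{v, f v} = {v', f v'}"
    show "v = v'"
    proof (rule ccontr)
      assume "v \<noteq> v'"
      hence "v = f v' \<and> f v = v'" using a(3) by (auto simp: doubleton_eq_iff)
      moreover have "dist (f v) < dist v" "dist (f v') < dist v'" using f a(1,2) by auto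
      ultimately show False by auto
    qed
  qed
  have "(\<lambda>v. {v, f v}) ` (W - {r}) \<subseteq> F" using f by auto
  hence "card (W - {r}) \<le> card F" using card_inj_on_le[OF inj _ fF] by auto
  thus ?thesis using r fW by (simp add: card_Diff_singleton) 
qed

lemma star_conn:
  assumes "finite W" "c \<in> W"
  shows "connected_graph W ((\<lambda>s. {c, s}) ` (W - {c})) \<and> card ((\<lambda>s. {c, s}) ` (W - {c})) = card W - 1"
proof
  let ?F = "(\<lambda>s. {c, s}) ` (W - {c})"
  have "inj_on (\<lambda>s. {c, s}) (W - {c})" by (rule inj_onI) (auto simp: doubleton_eq_iff)
  thus "card ?F = card W - 1" using assms by (simp add: card_image)
  have uc: "(u, c) \<in> (adj_rel ?F)\<^sup>* \<and> (c, u) \<in> (adj_rel ?F)\<^sup>*" if "u \<in> W" for u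
  proof (cases "u = c")
    case False
    hence "(u, c) \<in> adj_rel ?F" "(c, u) \<in> adj_rel ?F" using that unfolding adj_rel_def
      by (auto simp: insert_commute)
    thus ?thesis by auto
  qed auto
  have "simple_graph W ?F" unfolding simple_graph_def using assms by blast
  moreover have "\<forall>u\<in>W. \<forall>v\<in>W. (u, v) \<in> (adj_rel ?F)\<^sup>*"
  proof (intro ballI)
    fix u v assume "u \<in> W" "v \<in> W"
    thus "(u, v) \<in> (adj_rel ?F)\<^sup>*" using uc by (meson rtrancl_trans)
  qed
  ultimately show "connected_graph W ?F"
    unfolding connected_graph_def using assms by blast
qed

lemma sd_upper:
  assumes "S \<subseteq> W" "W \<subseteq> V" "F \<subseteq> E" "connected_graph W F"
  shows "steiner_dist V E S \<le> card F"
  unfolding steiner_dist_def using assms by (intro Least_le) blast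

lemma sd_lower:
  assumes "\<And>W F. W \<subseteq> V \<Longrightarrow> F \<subseteq> E \<Longrightarrow> connected_graph W F \<Longrightarrow> S \<subseteq> W \<Longrightarrow> m \<le> card F"
    and "S \<subseteq> W0" "W0 \<subseteq> V" "F0 \<subseteq> E" "connected_graph W0 F0"
  shows "m \<le> steiner_dist V E S"
proof -
  have "\<exists>W F. W \<subseteq> V \<and> F \<subseteq> E \<and> connected_graph W F \<and> S \<subseteq> W \<and> card F = steiner_dist V E S"
    unfolding steiner_dist_def by (rule LeastI[of _ "card F0"]) (use assms(2-5) in blast)
  then obtain W F where "W \<subseteq> V" "F \<subseteq> E" "connected_graph W F" "S \<subseteq> W" "card F = steiner_dist V E S"
    by blast
  thus ?thesis using assms(1) by metis
qed

definition EG :: "nat \<Rightarrow> (nat \<Rightarrow> bool) \<Rightarrow> nat set set" where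
  "EG n P = {{i, j} | i j. i < j \<and> j < n \<and> (i = 0 \<or> P j)}"

lemma star_EG: "star_E n = EG n (\<lambda>_. False)"
proof (rule set_eqI)
  fix x
  show "x \<in> star_E n \<longleftrightarrow> x \<in> EG n (\<lambda>_. False)"
  proof
    assume "x \<in> star_E n"
    then obtain i where "x = {0, i}" "1 \<le> i" "i < n" unfolding star_E_def by auto
    thus "x \<in> EG n (\<lambda>_. False)" unfolding EG_def
      by (intro CollectI exI[of _ 0] exI[of _ i]) auto
  next
    assume "x \<in> EG n (\<lambda>_. False)"
    then obtain i j where "x = {i, j}" "i < j" "j < n" "i = 0" unfolding EG_def by blast
    thus "x \<in> star_E n" unfolding star_E_def
      by (intro CollectI exI[of _ j]) auto
  qed
qed

lemma EG_mem: "i < j \<Longrightarrow> j < n \<Longrightarrow> i = 0 \<or> P j \<Longrightarrow> {i, j} \<in> EG n P"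
  unfolding EG_def by blast

lemma sd_EG:
  assumes k: "k \<ge> 2" and S: "S \<subseteq> {0..<n}" "card S = k"
  shows "steiner_dist {0..<n} (EG n P) S = (if 0 \<in> S \<or> P (Max S) then k - 1 else k)"
proof -
  have fS: "finite S" using S finite_subset by blast
  have Sne: "S \<noteq> {}" using S k by auto
  have lowgen: "card S - 1 \<le> card F" if "connected_graph W F" "S \<subseteq> W" for W F
  proof -
    have "finite W" using that unfolding connected_graph_def simple_graph_def by auto
    hence "card S \<le> card W" using that card_mono by blast
    thus ?thesis using conn_card[OF that(1)] by linarith
  qed
  show ?thesis
  proof (cases "0 \<in> S \<or> P (Max S)")
    case True
    obtain c where c: "c \<in> S" "\<forall>s\<in>S - {c}. {c, s} \<in> EG n P"
    proof (cases "0 \<in> S")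
      case True
      have "\<forall>s\<in>S - {0}. {0, s} \<in> EG n P"
        using S by (auto intro!: EG_mem)
      thus ?thesis using that True by blast
    next
      case False
      hence P: "P (Max S)" using \<open>0 \<in> S \<or> P (Max S)\<close> by blast
      have "\<forall>s\<in>S - {Max S}. {Max S, s} \<in> EG n P"
      proof
        fix s assume s: "s \<in> S - {Max S}"
        have "s \<le> Max S" using s Max_ge[OF fS, of s] by auto
        hence "s < Max S" using s by auto
        moreover have "Max S < n" using S Max_in[OF fS Sne] by auto
        ultimately have "{s, Max S} \<in> EG n P" using P by (intro EG_mem) auto
        thus "{Max S, s} \<in> EG n P" by (simp add: insert_commute)
      qed
      thus ?thesis using that Max_in[OF fS Sne] by blast
    qed
    let ?F = "(\<lambda>s. {c, s}) ` (S - {c})"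
    have sc: "connected_graph S ?F \<and> card ?F = card S - 1" using star_conn[OF fS c(1)] .
    have FE: "?F \<subseteq> EG n P" using c by auto
    have "steiner_dist {0..<n} (EG n P) S \<le> k - 1"
      using sd_upper[OF order_refl S(1) FE] sc S by auto
    moreover have "k - 1 \<le> steiner_dist {0..<n} (EG n P) S"
      using sd_lower[OF _ order_refl S(1) FE] sc lowgen S(2) by blast
    ultimately show ?thesis using True by simp
  next
    case False
    let ?W = "insert 0 S"
    let ?F = "(\<lambda>s. {0, s}) ` (?W - {0})"
    have fW: "finite ?W" using fS by simp
    have sc: "connected_graph ?W ?F \<and> card ?F = card ?W - 1" using star_conn[OF fW] by blast
    have WV: "?W \<subseteq> {0..<n}" using S k by (cases n) auto
    have FE: "?F \<subseteq> EG n P" 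
    proof
      fix e assume "e \<in> ?F"
      then obtain s where s: "s \<in> S" "e = {0, s}" by auto
      have "s \<noteq> 0" using s False by metis
      thus "e \<in> EG n P" using s S by (auto intro!: EG_mem)
    qed
    have cF: "card ?F = k" using sc False fS S by simp
    have "steiner_dist {0..<n} (EG n P) S \<le> k"
      using sd_upper[OF _ WV FE] sc cF by auto
    moreover have "k \<le> steiner_dist {0..<n} (EG n P) S"
    proof (rule sd_lower[OF _ _ WV FE])
      show "S \<subseteq> ?W" by auto
      show "connected_graph ?W ?F" using sc by blast
      fix W F assume a: "W \<subseteq> {0..<n}" "F \<subseteq> EG n P" "connected_graph W F" "S \<subseteq> W"
      show "k \<le> card F"
      proof (rule ccontr)
        assume "\<not> k \<le> card F"
        hence "card W \<le> k" using conn_card[OF a(3)] by linarith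
        moreover have fW': "finite W" using a(1) finite_subset by blast
        ultimately have WS: "S = W" using card_seteq[OF fW' a(4)] S(2) by auto
        define m where "m = Max S"
        have mS: "m \<in> S" using Max_in[OF fS Sne] m_def by simp
        have "card (S - {m}) = card S - 1" using card_Diff_singleton[OF mS] .
        hence "card (S - {m}) > 0" using S k by simp
        hence "S - {m} \<noteq> {}" by (simp add: card_gt_0_iff)
        then obtain u where u: "u \<in> S" "u \<noteq> m" by blast
        have "(m, u) \<in> (adj_rel F)\<^sup>*" using a(3) WS mS u unfolding connected_graph_def by blast
        then obtain y where y: "(m, y) \<in> adj_rel F" using u(2) by (metis converse_rtranclE)
        hence mF: "{m, y} \<in> F" "m \<noteq> y" unfolding adj_rel_def by auto
        have "y \<in> W" using a(3) mF unfolding connected_graph_def simple_graph_def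
          by (auto simp: doubleton_eq_iff)
        hence "y \<le> m" using WS Max_ge[OF fS, of y] m_def by simp
        hence "y < m" using mF(2) by simp
        obtain i j where ij: "{m, y} = {i, j}" "i < j" "i = 0 \<or> P j"
          using a(2) mF(1) unfolding EG_def by blast
        hence "i = y \<and> j = m" using \<open>y < m\<close> by (auto simp: doubleton_eq_iff)
        moreover have "y \<noteq> 0" using False \<open>y \<in> W\<close> WS by metis
        ultimately have "P m" using ij(3) by simp
        thus False using False m_def by simp
      qed
    qed
    ultimately show ?thesis using False by simp
  qed
qed


lemma SW_EG:
  assumes k: "k \<ge> 2"
  shows "int (SW k {0..<n} (EG n P)) = int k * int (card {S. S \<subseteq> {0..<n} \<and> card S = k})
     - int (card {S \<in> {S. S \<subseteq> {0..<n} \<and> card S = k}. 0 \<in> S \<or> P (Max S)})"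
proof -
  define K where "K = {S. S \<subseteq> {0..<n} \<and> card S = k}"
  have fK: "finite K" unfolding K_def by auto
  have "SW k {0..<n} (EG n P) = (\<Sum>S\<in>K. (if 0 \<in> S \<or> P (Max S) then k - 1 else k))"
    unfolding SW_def K_def[symmetric] by (rule sum.cong) (auto simp: K_def sd_EG[OF k])
  hence "int (SW k {0..<n} (EG n P)) = (\<Sum>S\<in>K. int k - (if 0 \<in> S \<or> P (Max S) then 1 else 0))"
    using k by (simp add: of_nat_sum of_nat_diff if_distrib cong: if_cong)
  also have "\<dots> = int k * int (card K) - (\<Sum>S\<in>K. (if 0 \<in> S \<or> P (Max S) then 1 else 0))"
    by (simp add: sum_subtractf)
  also have "(\<Sum>S\<in>K. (if 0 \<in> S \<or> P (Max S) then 1 else 0)) = (\<Sum>S\<in>{S\<in>K. 0 \<in> S \<or> P (Max S)}. (1::int))"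
    using sum.inter_filter[OF fK, of "\<lambda>_. (1::int)"] by simp
  finally show ?thesis unfolding K_def by simp
qed

lemma count_B:
  assumes k: "k \<ge> 2" and a: "Suc a < n"
  shows "card {S \<in> {S. S \<subseteq> {0..<n} \<and> card S = k}. 0 \<notin> S \<and> Max S = Suc a} = a choose (k - 1)"
proof -
  let ?T = "{T. T \<subseteq> {1..a} \<and> card T = k - 1}"
  have eq: "{S \<in> {S. S \<subseteq> {0..<n} \<and> card S = k}. 0 \<notin> S \<and> Max S = Suc a} = insert (Suc a) ` ?T"
  proof (rule set_eqI, rule iffI)
    fix S assume "S \<in> {S \<in> {S. S \<subseteq> {0..<n} \<and> card S = k}. 0 \<notin> S \<and> Max S = Suc a}"
    hence S: "S \<subseteq> {0..<n}" "card S = k" "0 \<notin> S" "Max S = Suc a" by auto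
    have fS: "finite S" using S(1) finite_subset by blast
    have "S \<noteq> {}" using S(2) k by auto
    hence m: "Suc a \<in> S" using Max_in[OF fS] S(4) by metis
    have "S - {Suc a} \<subseteq> {1..a}"
    proof
      fix x assume x: "x \<in> S - {Suc a}"
      have "x \<le> Suc a" using Max_ge[OF fS, of x] x S(4) by auto
      moreover have "x \<in> S" using x by simp
      hence "x \<noteq> 0" using S(3) by (cases x) auto
      ultimately show "x \<in> {1..a}" using x by auto
    qed
    moreover have "card (S - {Suc a}) = k - 1" using S(2) m by simp
    moreover have "S = insert (Suc a) (S - {Suc a})" using m by auto
    ultimately show "S \<in> insert (Suc a) ` ?T" by blast
  next
    fix S assume "S \<in> insert (Suc a) ` ?T"
    then obtain T where T: "T \<subseteq> {1..a}" "card T = k - 1" "S = insert (Suc a) T" by auto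
    have fT: "finite T" using T(1) finite_subset by blast
    have nT: "Suc a \<notin> T" using T(1) by auto
    have "card S = k" using T fT nT k by simp
    moreover have "S \<subseteq> {0..<n}" using T(1,3) a by auto
    moreover have "0 \<notin> S" using T(1,3) by auto
    moreover have "Max S = Suc a" using T(1,3) fT by (intro Max_eqI) auto
    ultimately show "S \<in> {S \<in> {S. S \<subseteq> {0..<n} \<and> card S = k}. 0 \<notin> S \<and> Max S = Suc a}" by auto
  qed
  have inj: "inj_on (insert (Suc a)) ?T"
  proof (rule inj_onI)
    fix X Y assume "X \<in> ?T" "Y \<in> ?T" "insert (Suc a) X = insert (Suc a) Y"
    thus "X = Y" by (metis (no_types, lifting) Diff_insert_absorb atLeastAtMost_iff mem_Collect_eq
        not_less_eq_eq order_refl subsetD)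
  qed
  have "card (insert (Suc a) ` ?T) = card ?T" using card_image[OF inj] .
  also have "\<dots> = a choose (k - 1)" using n_subsets[of "{1..a}" "k - 1"] by simp
  finally show ?thesis using eq by simp
qed


lemma EG_conn:
  assumes "n \<ge> 1"
  shows "connected_graph {0..<n} (EG n P)"
proof -
  let ?W = "{0..<n::nat}"
  let ?F = "(\<lambda>s. {0, s}) ` (?W - {0})"
  have c: "connected_graph ?W ?F" using star_conn[of ?W 0] assms by auto
  have FE: "?F \<subseteq> EG n P" by (auto intro!: EG_mem)
  have "adj_rel ?F \<subseteq> adj_rel (EG n P)" using FE unfolding adj_rel_def by auto
  hence mono: "(adj_rel ?F)\<^sup>* \<subseteq> (adj_rel (EG n P))\<^sup>*" by (rule rtrancl_mono)
  have "\<forall>e\<in>EG n P. \<exists>u v. u \<noteq> v \<and> u \<in> ?W \<and> v \<in> ?W \<and> e = {u, v}"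
  proof
    fix e assume "e \<in> EG n P"
    then obtain i j where "e = {i, j}" "i < j" "j < n" unfolding EG_def by blast
    thus "\<exists>u v. u \<noteq> v \<and> u \<in> ?W \<and> v \<in> ?W \<and> e = {u, v}"
      by (intro exI[of _ i] exI[of _ j]) auto
  qed
  hence "simple_graph ?W (EG n P)" unfolding simple_graph_def by blast
  thus ?thesis using c mono unfolding connected_graph_def by blast
qed

theorem proposition1p2:
  fixes k n :: nat and A :: "nat set"
  assumes "k \<ge> 2" and "n \<ge> 1" and "finite A"
    and "\<forall>a\<in>A. 0 < a \<and> a < n - 1"
  shows "\<exists>(V::nat set) E. connected_graph V E \<and>
           int (SW k V E) = int (SW k (star_V n) (star_E n)) - (\<Sum>a\<in>A. int (a choose (k - 1)))"
proof -
  define P where "P j = (\<exists>a\<in>A. j = Suc a)" for j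
  define K where "K = {S. S \<subseteq> {0..<n} \<and> card S = k}"
  have fK: "finite K" unfolding K_def by auto
  define B where "B a = {S \<in> K. 0 \<notin> S \<and> Max S = Suc a}" for a
  have D: "{S \<in> K. 0 \<in> S \<or> P (Max S)} = {S \<in> K. 0 \<in> S} \<union> (\<Union>a\<in>A. B a)"
    unfolding B_def P_def by auto
  have cU: "card (\<Union>a\<in>A. B a) = (\<Sum>a\<in>A. card (B a))"
    by (rule card_UN_disjoint) (use assms(3) fK in \<open>auto simp: B_def\<close>)
  have cB: "card (B a) = a choose (k - 1)" if "a \<in> A" for a
    unfolding B_def K_def using count_B[OF assms(1), of a n] assms(4) that by auto
  have "card {S \<in> K. 0 \<in> S \<or> P (Max S)} = card {S \<in> K. 0 \<in> S} + card (\<Union>a\<in>A. B a)"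
    unfolding D by (rule card_Un_disjoint) (use fK assms(3) in \<open>auto simp: B_def\<close>)
  hence cD: "int (card {S \<in> K. 0 \<in> S \<or> P (Max S)}) = int (card {S \<in> K. 0 \<in> S}) + (\<Sum>a\<in>A. int (a choose (k - 1)))"
    using cU cB by (simp add: of_nat_sum)
  have G: "int (SW k {0..<n} (EG n P)) = int k * int (card K) - int (card {S \<in> K. 0 \<in> S \<or> P (Max S)})"
    using SW_EG[OF assms(1), of n P] unfolding K_def .
  have St: "int (SW k (star_V n) (star_E n)) = int k * int (card K) - int (card {S \<in> K. 0 \<in> S})"
    using SW_EG[OF assms(1), of n "\<lambda>_. False"] unfolding K_def star_V_def star_EG by simp
  show ?thesis
    by (rule exI[of _ "{0..<n}"], rule exI[of _ "EG n P"]) (use EG_conn[OF assms(2)] G St cD in simp)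
qed

end
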